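(* Let $\mathcal{M}$ be a complete Riemannian submanifold of $\mathbb{R}^n$ with the Riemannian metric induced by the Euclidean inner product, let $f:\mathbb{R}^n\to\mathbb{R}$ be a lower semicontinuous function, let $x\in\mathcal{M}$, and let $R$ be any retraction on $\mathcal{M}$, with $R_x$ its restriction to $T_x\mathcal{M}$. Then $v\in\hat\partial_{\mathcal R} f(x)$ if and only if $v\in T_x\mathcal{M}$ and \[ f\circ R_x(\eta_x)\ \ge\ f\circ R_x(0_x)+\langle v,\eta_x\rangle+o(\|\eta_x\|)\qquad\text{for all }\eta_x\in T_x\mathcal{M}. \]
   Context: $T_x\mathcal{M}$ is the tangent space of $\mathcal{M}$ at $x$ and $0_x$ its zero element; $T\mathcal{M}$ is the tangent bundle. A retraction is a smooth map $R:T\mathcal{M}\to\mathcal{M}$ such that, writing $R_x$ for its restriction to $T_x\mathcal{M}$, $R_x(0_x)=x$ and the differential satisfies $dR_x(0_x)=\mathrm{id}_{T_x\mathcal{M}}$. For a function $h$ that is $C^1$ on a neighborhood of $x$ in $\mathbb{R}^n$, its Riemannian gradient is $\operatorname{grad}h(x)=\operatorname{Proj}_{T_x\mathcal{M}}\nabla h(x)$ (orthogonal projection). Write $B_{x,\delta}=\{y:\|y-x\|\le\delta\}$. The Riemannian Fréchet subdifferential of $f$ at $x\in\mathcal{M}$ is $\hat\partial_{\mathcal R} f(x)=\{\operatorname{grad}h(x):\ \exists\,\delta>0$ such that $h\in C^1(B_{x,\delta})$ and $f-h$ attains a local minimum at $x$ on $\mathcal{M}\}$. *)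

theory Defs
  imports "HOL-Analysis.Analysis" "HOL-Library.Landau_Symbols"
begin

text \<open>C-infinity maps on an open subset S of a Euclidean space: all iterated
  (Frechet) derivatives exist on S.  G ds is the iterated partial derivative
  along the list of basis directions ds.\<close>
definition Cinf_on :: "'a::euclidean_space set \<Rightarrow> ('a \<Rightarrow> 'b::real_normed_vector) \<Rightarrow> bool" where
  "Cinf_on S f \<longleftrightarrow> open S \<and>
     (\<exists>G :: 'a list \<Rightarrow> 'a \<Rightarrow> 'b.
        (\<forall>x\<in>S. G [] x = f x) \<and>
        (\<forall>ds. \<forall>x\<in>S. (G ds has_derivative (\<lambda>h. \<Sum>i\<in>Basis. (h \<bullet> i) *\<^sub>R G (i # ds) x)) (at x)))"

definition smooth_map_on :: "'a::euclidean_space set \<Rightarrow> ('a \<Rightarrow> 'b::real_normed_vector) \<Rightarrow> bool" where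
  "smooth_map_on A F \<longleftrightarrow>
     (\<forall>p\<in>A. \<exists>U G. open U \<and> p \<in> U \<and> Cinf_on U G \<and> (\<forall>q\<in>U \<inter> A. G q = F q))"

definition embedded_submanifold :: "'a::euclidean_space set \<Rightarrow> bool" where
  "embedded_submanifold M \<longleftrightarrow>
     (\<exists>d. \<forall>p\<in>M. \<exists>U W (\<phi>::'a \<Rightarrow> 'a) (\<psi>::'a \<Rightarrow> 'a) L.
        open U \<and> p \<in> U \<and> open W \<and> Cinf_on U \<phi> \<and> Cinf_on W \<psi> \<and>
        \<phi> ` U = W \<and> (\<forall>q\<in>U. \<psi> (\<phi> q) = q) \<and> (\<forall>w\<in>W. \<phi> (\<psi> w) = w) \<and>
        subspace L \<and> dim L = d \<and> \<phi> ` (M \<inter> U) = L \<inter> W)"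

definition tangent_space :: "'a::euclidean_space set \<Rightarrow> 'a \<Rightarrow> 'a set" where
  "tangent_space M x = {v. \<exists>(\<gamma>::real \<Rightarrow> 'a) e. e > 0 \<and> Cinf_on {-e<..<e} \<gamma> \<and>
       (\<forall>t\<in>{-e<..<e}. \<gamma> t \<in> M) \<and> \<gamma> 0 = x \<and> (\<gamma> has_vector_derivative v) (at 0)}"

definition tangent_bundle :: "'a::euclidean_space set \<Rightarrow> ('a \<times> 'a) set" where
  "tangent_bundle M = {(x, v). x \<in> M \<and> v \<in> tangent_space M x}"

text \<open>Points p, q can be joined in M by a C1 curve of length less than e
  (the induced Riemannian distance is the infimum of such lengths).\<close>
definition joinable :: "'a::euclidean_space set \<Rightarrow> 'a \<Rightarrow> 'a \<Rightarrow> real \<Rightarrow> bool" where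
  "joinable M p q e \<longleftrightarrow> (\<exists>\<gamma>. \<gamma> C1_differentiable_on {0..1} \<and> (\<forall>t\<in>{0..1}. \<gamma> t \<in> M) \<and>
       \<gamma> 0 = p \<and> \<gamma> 1 = q \<and> integral {0..1} (\<lambda>t. norm (vector_derivative \<gamma> (at t))) < e)"

text \<open>Completeness of M as a metric space with the induced Riemannian distance.\<close>
definition riemannian_complete :: "'a::euclidean_space set \<Rightarrow> bool" where
  "riemannian_complete M \<longleftrightarrow>
     (\<forall>X::nat \<Rightarrow> 'a. (\<forall>n. X n \<in> M) \<and> (\<forall>e>0. \<exists>N. \<forall>m\<ge>N. \<forall>k\<ge>N. joinable M (X m) (X k) e) \<longrightarrow>
          (\<exists>p\<in>M. \<forall>e>0. \<exists>N. \<forall>m\<ge>N. joinable M (X m) p e))"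

definition riem_retraction :: "'a::euclidean_space set \<Rightarrow> ('a \<times> 'a \<Rightarrow> 'a) \<Rightarrow> bool" where
  "riem_retraction M R \<longleftrightarrow> smooth_map_on (tangent_bundle M) R \<and>
     (\<forall>z\<in>tangent_bundle M. R z \<in> M) \<and>
     (\<forall>x\<in>M. R (x, 0) = x \<and> ((\<lambda>v. R (x, v)) has_derivative id) (at 0 within tangent_space M x))"

definition lower_semicontinuous :: "('a::topological_space \<Rightarrow> real) \<Rightarrow> bool" where
  "lower_semicontinuous f \<longleftrightarrow> (\<forall>a. open {x. a < f x})"

definition proj_onto :: "'a::real_inner set \<Rightarrow> 'a \<Rightarrow> 'a" where
  "proj_onto T g = (THE p. p \<in> T \<and> (\<forall>w\<in>T. (g - p) \<bullet> w = 0))"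

definition riem_frechet_subdiff :: "'a::euclidean_space set \<Rightarrow> ('a \<Rightarrow> real) \<Rightarrow> 'a \<Rightarrow> 'a set" where
  "riem_frechet_subdiff M f x =
     {proj_onto (tangent_space M x) (g x) | g h. \<exists>\<delta>>0.
        (\<forall>y\<in>cball x \<delta>. (h has_derivative (\<lambda>u. g y \<bullet> u)) (at y)) \<and> continuous_on (cball x \<delta>) g \<and>
        (\<exists>\<epsilon>>0. \<forall>y\<in>M. dist y x < \<epsilon> \<longrightarrow> f x - h x \<le> f y - h y)}"

end

theory Submission
  imports Defs
begin


lemma Cinf_C1:
  assumes "Cinf_on S f"
  shows "\<exists>f'. continuous_on S f' \<and> (\<forall>x\<in>S. (f has_derivative blinfun_apply (f' x)) (at x))"
proof -
  obtain G :: "'a list \<Rightarrow> 'a \<Rightarrow> 'b" where S: "open S" and G0: "\<forall>x\<in>S. G [] x = f x"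
    and GD: "\<forall>ds. \<forall>x\<in>S. (G ds has_derivative (\<lambda>h. \<Sum>i\<in>Basis. (h \<bullet> i) *\<^sub>R G (i # ds) x)) (at x)"
    using assms unfolding Cinf_on_def by blast
  define f' where "f' x = Blinfun (\<lambda>h. \<Sum>i\<in>Basis. (h \<bullet> i) *\<^sub>R G [i] x)" for x
  have bl: "bounded_linear (\<lambda>h. \<Sum>i\<in>Basis. (h \<bullet> i) *\<^sub>R G [i] x)" for x
    by (intro bounded_linear_sum bounded_linear_scaleR_const bounded_linear_inner_left)
  have ap: "blinfun_apply (f' x) = (\<lambda>h. \<Sum>i\<in>Basis. (h \<bullet> i) *\<^sub>R G [i] x)" for x
    unfolding f'_def using bl bounded_linear_Blinfun_apply by blast
  have cont: "continuous_on S (G ds)" for ds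
    by (rule continuous_at_imp_continuous_on) (use GD has_derivative_continuous in blast)
  have "continuous_on S f'"
    apply (rule continuous_on_blinfun_componentwise)
    unfolding ap by (intro continuous_on_sum continuous_on_scaleR continuous_on_const cont)
  moreover have "(f has_derivative blinfun_apply (f' x)) (at x)" if "x \<in> S" for x
  proof -
    have "(G [] has_derivative (\<lambda>h. \<Sum>i\<in>Basis. (h \<bullet> i) *\<^sub>R G [i] x)) (at x)"
      using GD that by blast
    then show ?thesis unfolding ap
      by (rule has_derivative_transform_within_open[OF _ S that]) (use G0 in simp)
  qed
  ultimately show ?thesis by blast
qed

fun Kit :: "('a::euclidean_space list \<Rightarrow> 'a \<Rightarrow> 'b::real_normed_vector) \<Rightarrow> 'a \<Rightarrow> nat \<Rightarrow> 'a list \<Rightarrow> 'a \<Rightarrow> 'b" where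
  "Kit G w 0 ds y = G ds y"
| "Kit G w (Suc n) ds y = (\<Sum>j\<in>Basis. (w \<bullet> j) *\<^sub>R Kit G w n (ds @ [j]) y)"

lemma Kit_deriv:
  assumes GD: "\<forall>ds. \<forall>x\<in>W. (G ds has_derivative (\<lambda>h. \<Sum>i\<in>Basis. (h \<bullet> i) *\<^sub>R G (i # ds) x)) (at x)"
    and "y \<in> W"
  shows "(Kit G w n ds has_derivative (\<lambda>h. \<Sum>i\<in>Basis. (h \<bullet> i) *\<^sub>R Kit G w n (i # ds) y)) (at y)"
proof (induction n arbitrary: ds)
  case 0
  then show ?case using GD assms(2) by simp
next
  case (Suc n)
  have "((\<lambda>y. \<Sum>j\<in>Basis. (w \<bullet> j) *\<^sub>R Kit G w n (ds @ [j]) y) has_derivative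
     (\<lambda>h. \<Sum>j\<in>Basis. (w \<bullet> j) *\<^sub>R (\<Sum>i\<in>Basis. (h \<bullet> i) *\<^sub>R Kit G w n (i # ds @ [j]) y))) (at y)"
    by (intro has_derivative_sum has_derivative_scaleR_right) (use Suc in auto)
  then show ?case
    apply simp
    apply (rule has_derivative_eq_rhs, assumption)
    apply (rule ext)
    apply (simp add: scaleR_sum_right)
    apply (subst sum.swap)
    apply (simp add: scaleR_scaleR mult.commute)
    done
qed

lemma Cinf_affine_curve:
  fixes \<psi> :: "'a::euclidean_space \<Rightarrow> 'b::real_normed_vector"
  assumes "Cinf_on W \<psi>" "open S" "\<forall>t\<in>S. a + t *\<^sub>R w \<in> W"
  shows "Cinf_on S (\<lambda>t::real. \<psi> (a + t *\<^sub>R w))"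
proof -
  obtain G :: "'a list \<Rightarrow> 'a \<Rightarrow> 'b" where W: "open W" and G0: "\<forall>x\<in>W. G [] x = \<psi> x"
    and GD: "\<forall>ds. \<forall>x\<in>W. (G ds has_derivative (\<lambda>h. \<Sum>i\<in>Basis. (h \<bullet> i) *\<^sub>R G (i # ds) x)) (at x)"
    using assms unfolding Cinf_on_def by blast
  define H where "H ds t = Kit G w (length ds) [] (a + t *\<^sub>R w)" for ds :: "real list" and t
  have "(H ds has_derivative (\<lambda>h. \<Sum>i\<in>Basis. (h \<bullet> i) *\<^sub>R H (i # ds) t)) (at t)" if "t \<in> S" for ds t
  proof -
    have aff: "((\<lambda>t. a + t *\<^sub>R w) has_derivative (\<lambda>s. s *\<^sub>R w)) (at t)"
      by (auto intro!: derivative_eq_intros)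
    have "((\<lambda>t. Kit G w (length ds) [] (a + t *\<^sub>R w)) has_derivative
        (\<lambda>s. \<Sum>i\<in>Basis. ((s *\<^sub>R w) \<bullet> i) *\<^sub>R Kit G w (length ds) [i] (a + t *\<^sub>R w))) (at t)"
      by (rule has_derivative_compose[OF aff Kit_deriv[OF GD]]) (use assms(3) that in auto)
    then show ?thesis
      unfolding H_def
      by (rule has_derivative_eq_rhs) (auto simp: o_def scaleR_sum_right)
  qed
  moreover have "\<forall>t\<in>S. H [] t = \<psi> (a + t *\<^sub>R w)"
    using G0 assms(3) by (simp add: H_def)
  ultimately show ?thesis unfolding Cinf_on_def using assms(2) by blast
qed



lemma vd_quot:
  fixes f :: "real \<Rightarrow> 'a::real_normed_vector"
  assumes "(f has_vector_derivative D) (at 0)"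
  shows "((\<lambda>t. (f t - f 0) /\<^sub>R t) \<longlongrightarrow> D) (at 0)"
proof -
  have "((\<lambda>t. norm (f t - f 0 - t *\<^sub>R D) / norm t) \<longlongrightarrow> 0) (at 0)"
    using assms unfolding has_vector_derivative_def has_derivative_iff_norm by simp
  moreover have eq: "norm (f t - f 0 - t *\<^sub>R D) / norm t = norm ((f t - f 0) /\<^sub>R t - D)" if "t \<noteq> 0" for t
  proof -
    have "(f t - f 0) /\<^sub>R t - D = inverse t *\<^sub>R (f t - f 0 - t *\<^sub>R D)" using that by (simp add: scaleR_diff_right)
    then show ?thesis by (simp add: divide_simps)
  qed
  moreover have ev: "eventually (\<lambda>t. norm (f t - f 0 - t *\<^sub>R D) / norm t = norm ((f t - f 0) /\<^sub>R t - D)) (at 0)"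
    unfolding eventually_at_filter using eq by simp
  ultimately have "((\<lambda>t. norm ((f t - f 0) /\<^sub>R t - D)) \<longlongrightarrow> 0) (at 0)"
    using tendsto_cong[OF ev] by simp
  then show ?thesis
    using tendsto_norm_zero_iff LIM_zero_iff by blast
qed

lemma chart_tangent:
  fixes M :: "'a::euclidean_space set" and \<phi> \<psi> :: "'a \<Rightarrow> 'a"
  assumes xM: "x \<in> M" and U: "open U" "x \<in> U" and W: "open W"
    and cphi: "Cinf_on U \<phi>" and cpsi: "Cinf_on W \<psi>" and img: "\<phi> ` U = W"
    and inv1: "\<forall>q\<in>U. \<psi> (\<phi> q) = q" and inv2: "\<forall>w\<in>W. \<phi> (\<psi> w) = w"
    and L: "subspace L" and sl: "\<phi> ` (M \<inter> U) = L \<inter> W"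
  shows "\<exists>\<phi>' \<psi>'. linear \<phi>' \<and> linear \<psi>' \<and> (\<phi> has_derivative \<phi>') (at x) \<and>
     (\<psi> has_derivative \<psi>') (at (\<phi> x)) \<and> (\<forall>u. \<psi>' (\<phi>' u) = u) \<and> (\<forall>u. \<phi>' (\<psi>' u) = u) \<and>
     tangent_space M x = \<psi>' ` L"
proof -
  obtain Dphi where Dphi: "\<forall>q\<in>U. (\<phi> has_derivative blinfun_apply (Dphi q)) (at q)"
    using Cinf_C1[OF cphi] by blast
  obtain Dpsi where Dpsi: "\<forall>q\<in>W. (\<psi> has_derivative blinfun_apply (Dpsi q)) (at q)"
    using Cinf_C1[OF cpsi] by blast
  define \<phi>' where "\<phi>' = blinfun_apply (Dphi x)"
  define \<psi>' where "\<psi>' = blinfun_apply (Dpsi (\<phi> x))"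
  have pxW: "\<phi> x \<in> W" using img U by blast
  have dphi: "(\<phi> has_derivative \<phi>') (at x)" using Dphi U unfolding \<phi>'_def by blast
  have dpsi: "(\<psi> has_derivative \<psi>') (at (\<phi> x))" using Dpsi pxW unfolding \<psi>'_def by blast
  have lphi: "linear \<phi>'" using dphi has_derivative_linear by blast
  have lpsi: "linear \<psi>'" using dpsi has_derivative_linear by blast
  have c1: "((\<lambda>q. \<psi> (\<phi> q)) has_derivative (\<lambda>u. \<psi>' (\<phi>' u))) (at x)"
    by (rule has_derivative_compose[OF dphi dpsi])
  have c1': "((\<lambda>q. \<psi> (\<phi> q)) has_derivative (\<lambda>u. u)) (at x)"
    by (rule has_derivative_transform_within_open[OF has_derivative_ident U(1) U(2)]) (use inv1 in auto)
  have "(\<lambda>u. \<psi>' (\<phi>' u)) = (\<lambda>u. u)" by (rule has_derivative_unique[OF c1 c1'])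
  then have id1: "\<forall>u. \<psi>' (\<phi>' u) = u" by (simp add: fun_eq_iff)
  have xx: "\<psi> (\<phi> x) = x" using inv1 U by blast
  have dphi2: "(\<phi> has_derivative \<phi>') (at (\<psi> (\<phi> x)))" using dphi xx by simp
  have c2: "((\<lambda>q. \<phi> (\<psi> q)) has_derivative (\<lambda>u. \<phi>' (\<psi>' u))) (at (\<phi> x))"
    by (rule has_derivative_compose[OF dpsi dphi2])
  have c2': "((\<lambda>q. \<phi> (\<psi> q)) has_derivative (\<lambda>u. u)) (at (\<phi> x))"
    by (rule has_derivative_transform_within_open[OF has_derivative_ident W pxW]) (use inv2 in auto)
  have "(\<lambda>u. \<phi>' (\<psi>' u)) = (\<lambda>u. u)" by (rule has_derivative_unique[OF c2 c2'])
  then have id2: "\<forall>u. \<phi>' (\<psi>' u) = u" by (simp add: fun_eq_iff)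
  have pxL: "\<phi> x \<in> L" using sl xM U by blast
  have sub1: "v \<in> \<psi>' ` L" if vT: "v \<in> tangent_space M x" for v
  proof -
    obtain \<gamma> e where e: "e > 0" and cg: "Cinf_on {-e<..<e} \<gamma>" and gM: "\<forall>t\<in>{-e<..<e}. \<gamma> t \<in> M"
      and g0: "\<gamma> 0 = x" and gd: "(\<gamma> has_vector_derivative v) (at 0)"
      using vT unfolding tangent_space_def by blast
    have dphi0: "(\<phi> has_derivative \<phi>') (at (\<gamma> 0))" using dphi g0 by simp
    have "((\<lambda>t. \<phi> (\<gamma> t)) has_derivative (\<lambda>s. \<phi>' (s *\<^sub>R v))) (at 0)"
      by (rule has_derivative_compose[OF gd[unfolded has_vector_derivative_def] dphi0])
    then have "((\<lambda>t. \<phi> (\<gamma> t)) has_vector_derivative \<phi>' v) (at 0)"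
      unfolding has_vector_derivative_def using linear_scale[OF lphi] by simp
    from vd_quot[OF this] have lim: "((\<lambda>t. (\<phi> (\<gamma> t) - \<phi> (\<gamma> 0)) /\<^sub>R t) \<longlongrightarrow> \<phi>' v) (at 0)" .
    have "isCont \<gamma> 0" using gd has_vector_derivative_continuous by blast
    then have evU: "eventually (\<lambda>t. \<gamma> t \<in> U) (at 0)"
      by (intro topological_tendstoD[OF _ U(1)]) (use g0 U(2) in \<open>simp_all add: isCont_def\<close>)
    have eve: "eventually (\<lambda>t. t \<in> {-e<..<e}) (at (0::real))"
      unfolding eventually_at using e by (intro exI[of _ e]) (auto simp: dist_real_def)
    have "eventually (\<lambda>t. (\<phi> (\<gamma> t) - \<phi> (\<gamma> 0)) /\<^sub>R t \<in> L) (at 0)"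
      using evU eve
    proof eventually_elim
      case (elim t)
      then have "\<phi> (\<gamma> t) \<in> L" using gM sl by blast
      then show ?case using pxL g0 L by (simp add: subspace_diff subspace_scale)
    qed
    then have "\<phi>' v \<in> L"
      using Lim_in_closed_set[OF closed_subspace[OF L] _ _ lim] by (simp add: trivial_limit_at)
    moreover have "v = \<psi>' (\<phi>' v)" using id1 by simp
    ultimately show ?thesis by blast
  qed
  have sub2: "\<psi>' w \<in> tangent_space M x" if wL: "w \<in> L" for w
  proof -
    obtain \<epsilon> where \<epsilon>: "\<epsilon> > 0" "ball (\<phi> x) \<epsilon> \<subseteq> W" using W pxW open_contains_ball by blast
    define e where "e = \<epsilon> / (norm w + 1)"
    have e: "e > 0" using \<epsilon> by (simp add: e_def add_nonneg_pos)
    have inW: "\<phi> x + t *\<^sub>R w \<in> W" if "t \<in> {-e<..<e}" for t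
    proof -
      have "\<bar>t\<bar> < e" using that by auto
      then have "\<bar>t\<bar> * (norm w + 1) < \<epsilon>" unfolding e_def by (simp add: pos_less_divide_eq add_nonneg_pos)
      moreover have "\<bar>t\<bar> * norm w \<le> \<bar>t\<bar> * (norm w + 1)" by (simp add: mult_left_mono)
      ultimately have "norm (t *\<^sub>R w) < \<epsilon>" by simp
      then have "dist (\<phi> x) (\<phi> x + t *\<^sub>R w) < \<epsilon>" by (simp add: dist_norm)
      then show ?thesis using \<epsilon>(2) by (meson in_mono mem_ball)
    qed
    have cg: "Cinf_on {-e<..<e} (\<lambda>t. \<psi> (\<phi> x + t *\<^sub>R w))"
      by (rule Cinf_affine_curve[OF cpsi open_greaterThanLessThan]) (use inW in blast)
    have gM: "\<psi> (\<phi> x + t *\<^sub>R w) \<in> M" if "t \<in> {-e<..<e}" for t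
    proof -
      have "\<phi> x + t *\<^sub>R w \<in> L \<inter> W" using inW[OF that] pxL wL L by (simp add: subspace_add subspace_scale)
      then have "\<phi> x + t *\<^sub>R w \<in> \<phi> ` (M \<inter> U)" using sl by simp
      then obtain q where "q \<in> M \<inter> U" "\<phi> q = \<phi> x + t *\<^sub>R w" by (auto elim!: imageE)
      then show ?thesis using inv1 by force
    qed
    have aff: "((\<lambda>t. \<phi> x + t *\<^sub>R w) has_derivative (\<lambda>s. s *\<^sub>R w)) (at 0)"
      by (auto intro!: derivative_eq_intros)
    have dpsi0: "(\<psi> has_derivative \<psi>') (at (\<phi> x + 0 *\<^sub>R w))" using dpsi by simp
    have "((\<lambda>t. \<psi> (\<phi> x + t *\<^sub>R w)) has_derivative (\<lambda>s. \<psi>' (s *\<^sub>R w))) (at 0)"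
      by (rule has_derivative_compose[OF aff dpsi0])
    then have gd: "((\<lambda>t. \<psi> (\<phi> x + t *\<^sub>R w)) has_vector_derivative \<psi>' w) (at 0)"
      unfolding has_vector_derivative_def using linear_scale[OF lpsi] by simp
    have "\<psi> (\<phi> x + 0 *\<^sub>R w) = x" using xx by simp
    then show ?thesis unfolding tangent_space_def mem_Collect_eq
      using e cg gM gd by blast
  qed
  have "tangent_space M x = \<psi>' ` L" using sub1 sub2 by blast
  then show ?thesis using lphi lpsi dphi dpsi id1 id2 by blast
qed



lemma proj_onto_char:
  fixes T :: "'a::euclidean_space set"
  assumes "subspace T"
  shows "proj_onto T g \<in> T \<and> (\<forall>w\<in>T. (g - proj_onto T g) \<bullet> w = 0)"
proof -
  obtain y z where y: "y \<in> span T" and z: "\<And>w. w \<in> span T \<Longrightarrow> orthogonal z w" and g: "g = y + z"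
    using orthogonal_subspace_decomp_exists by blast
  have sT: "span T = T" using assms by simp
  have yT: "y \<in> T" using y sT by simp
  have "(g - y) \<bullet> w = 0" if "w \<in> T" for w
    using z[of w] that sT g by (simp add: orthogonal_def)
  with yT have ex: "y \<in> T \<and> (\<forall>w\<in>T. (g - y) \<bullet> w = 0)" by blast
  have un: "p = y" if pp: "p \<in> T \<and> (\<forall>w\<in>T. (g - p) \<bullet> w = 0)" for p
  proof -
    have ypT: "y - p \<in> T" using pp yT assms by (simp add: subspace_diff)
    have "(g - p) \<bullet> (y - p) = 0" using pp ypT by blast
    moreover have "(g - y) \<bullet> (y - p) = 0" using ex ypT by blast
    ultimately have "(g - p) \<bullet> (y - p) - (g - y) \<bullet> (y - p) = 0" by simp
    then have "(y - p) \<bullet> (y - p) = 0"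
      by (simp add: inner_diff_left inner_diff_right algebra_simps)
    then show ?thesis by simp
  qed
  have "proj_onto T g = y" unfolding proj_onto_def
    apply (rule the_equality)
     apply (rule ex)
    apply (erule un)
    done
  then show ?thesis using ex by simp
qed

lemma proj_onto_eq:
  fixes T :: "'a::euclidean_space set"
  assumes "subspace T" "p \<in> T" "\<forall>w\<in>T. (g - p) \<bullet> w = 0"
  shows "proj_onto T g = p"
proof -
  have c: "proj_onto T g \<in> T" "\<forall>w\<in>T. (g - proj_onto T g) \<bullet> w = 0" using proj_onto_char[OF assms(1)] by auto
  have d: "p - proj_onto T g \<in> T" using c assms by (simp add: subspace_diff)
  have "(g - proj_onto T g) \<bullet> (p - proj_onto T g) - (g - p) \<bullet> (p - proj_onto T g) = 0"
    using c d assms by simp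
  then have "(p - proj_onto T g) \<bullet> (p - proj_onto T g) = 0"
    by (simp add: inner_diff_left inner_diff_right algebra_simps)
  then show ?thesis by simp
qed

lemma proj_onto_linear:
  fixes T :: "'a::euclidean_space set"
  assumes "subspace T"
  shows "linear (proj_onto T)"
proof (rule linearI)
  fix a b :: 'a and c :: real
  have ca: "proj_onto T a \<in> T" "\<forall>w\<in>T. (a - proj_onto T a) \<bullet> w = 0" using proj_onto_char[OF assms] by auto
  have cb: "proj_onto T b \<in> T" "\<forall>w\<in>T. (b - proj_onto T b) \<bullet> w = 0" using proj_onto_char[OF assms] by auto
  show "proj_onto T (a + b) = proj_onto T a + proj_onto T b"
  proof (rule proj_onto_eq[OF assms])
    show "proj_onto T a + proj_onto T b \<in> T" using ca cb assms by (simp add: subspace_add)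
    show "\<forall>w\<in>T. (a + b - (proj_onto T a + proj_onto T b)) \<bullet> w = 0"
    proof
      fix w assume w: "w \<in> T"
      have "(a + b - (proj_onto T a + proj_onto T b)) \<bullet> w = (a - proj_onto T a) \<bullet> w + (b - proj_onto T b) \<bullet> w"
        by (simp add: inner_diff_left inner_add_left)
      then show "(a + b - (proj_onto T a + proj_onto T b)) \<bullet> w = 0" using ca(2) cb(2) w by simp
    qed
  qed
  show "proj_onto T (c *\<^sub>R a) = c *\<^sub>R proj_onto T a"
  proof (rule proj_onto_eq[OF assms])
    show "c *\<^sub>R proj_onto T a \<in> T" using ca assms by (simp add: subspace_scale)
    show "\<forall>w\<in>T. (c *\<^sub>R a - c *\<^sub>R proj_onto T a) \<bullet> w = 0"
    proof
      fix w assume w: "w \<in> T"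
      have "(c *\<^sub>R a - c *\<^sub>R proj_onto T a) \<bullet> w = c * ((a - proj_onto T a) \<bullet> w)"
        by (simp add: inner_diff_left right_diff_distrib)
      then show "(c *\<^sub>R a - c *\<^sub>R proj_onto T a) \<bullet> w = 0" using ca(2) w by simp
    qed
  qed
qed

lemma deriv_unique_subspace:
  fixes f :: "'a::real_normed_vector \<Rightarrow> 'b::real_normed_vector"
  assumes A: "(f has_derivative A) (at 0 within T)" and B: "(f has_derivative B) (at 0 within T)"
    and T: "subspace T" and k: "k \<in> T"
  shows "A k = B k"
proof -
  have g: "((\<lambda>t::real. t *\<^sub>R k) has_derivative (\<lambda>t. t *\<^sub>R k)) (at 0)"
    by (rule bounded_linear_imp_has_derivative[OF bounded_linear_scaleR_left])
  have sub: "range (\<lambda>t::real. t *\<^sub>R k) \<subseteq> T" using subspace_scale[OF T k] by auto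
  have e0: "(\<lambda>t::real. t *\<^sub>R k) 0 = 0" by simp
  have A': "(f has_derivative A) (at ((\<lambda>t::real. t *\<^sub>R k) 0) within range (\<lambda>t::real. t *\<^sub>R k))"
    unfolding e0 by (rule has_derivative_subset[OF A sub])
  have B': "(f has_derivative B) (at ((\<lambda>t::real. t *\<^sub>R k) 0) within range (\<lambda>t::real. t *\<^sub>R k))"
    unfolding e0 by (rule has_derivative_subset[OF B sub])
  have "((f \<circ> (\<lambda>t. t *\<^sub>R k)) has_derivative (A \<circ> (\<lambda>t. t *\<^sub>R k))) (at 0)"
    by (rule diff_chain_within[OF g A'])
  moreover have "((f \<circ> (\<lambda>t. t *\<^sub>R k)) has_derivative (B \<circ> (\<lambda>t. t *\<^sub>R k))) (at 0)"
    by (rule diff_chain_within[OF g B'])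
  ultimately have "A \<circ> (\<lambda>t. t *\<^sub>R k) = B \<circ> (\<lambda>t. t *\<^sub>R k)" by (rule has_derivative_unique)
  then have "(A \<circ> (\<lambda>t. t *\<^sub>R k)) 1 = (B \<circ> (\<lambda>t. t *\<^sub>R k)) 1" by simp
  then show ?thesis by simp
qed

lemma has_derivative_lipschitz_at:
  assumes "(f has_derivative f') (at a)"
  shows "\<exists>C>0. eventually (\<lambda>y. norm (f y - f a) \<le> C * norm (y - a)) (nhds a)"
proof -
  have bl: "bounded_linear f'" using assms has_derivative_bounded_linear by blast
  obtain K where K: "K > 0" "\<And>h. norm (f' h) \<le> norm h * K" using bounded_linear.pos_bounded[OF bl] by blast
  have "((\<lambda>y. norm ((f y - f a) - f' (y - a)) / norm (y - a)) \<longlongrightarrow> 0) (at a)"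
    using assms unfolding has_derivative_iff_norm by simp
  then have "eventually (\<lambda>y. norm ((f y - f a) - f' (y - a)) / norm (y - a) < 1) (at a)"
    by (rule order_tendstoD) simp
  then have ev: "eventually (\<lambda>y. y \<noteq> a \<longrightarrow> norm ((f y - f a) - f' (y - a)) / norm (y - a) < 1) (nhds a)"
    unfolding eventually_at_filter by (rule eventually_mono) auto
  have "eventually (\<lambda>y. norm (f y - f a) \<le> (K + 1) * norm (y - a)) (nhds a)"
    using ev
  proof (rule eventually_mono)
    fix y assume h: "y \<noteq> a \<longrightarrow> norm ((f y - f a) - f' (y - a)) / norm (y - a) < 1"
    show "norm (f y - f a) \<le> (K + 1) * norm (y - a)"
    proof (cases "y = a")
      case True then show ?thesis by simp
    next
      case False
      then have "norm ((f y - f a) - f' (y - a)) < norm (y - a)" using h by (simp add: divide_less_eq)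
      moreover have "norm (f y - f a) \<le> norm ((f y - f a) - f' (y - a)) + norm (f' (y - a))"
        by (metis norm_triangle_sub add.commute)
      ultimately show ?thesis using K(2)[of "y - a"] by (simp add: algebra_simps)
    qed
  qed
  then show ?thesis using K(1) by (intro exI[of _ "K + 1"]) simp
qed

lemma tangent_subspace:
  fixes M :: "'a::euclidean_space set"
  assumes "embedded_submanifold M" "x \<in> M"
  shows "subspace (tangent_space M x)"
proof -
  obtain d where chs: "\<forall>p\<in>M. \<exists>U W (\<phi>::'a \<Rightarrow> 'a) (\<psi>::'a \<Rightarrow> 'a) L.
        open U \<and> p \<in> U \<and> open W \<and> Cinf_on U \<phi> \<and> Cinf_on W \<psi> \<and>
        \<phi> ` U = W \<and> (\<forall>q\<in>U. \<psi> (\<phi> q) = q) \<and> (\<forall>w\<in>W. \<phi> (\<psi> w) = w) \<and>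
        subspace L \<and> dim L = d \<and> \<phi> ` (M \<inter> U) = L \<inter> W"
    using assms(1) unfolding embedded_submanifold_def by blast
  obtain U W L and \<phi> \<psi> :: "'a \<Rightarrow> 'a" where ch: "open U" "x \<in> U" "open W" "Cinf_on U \<phi>" "Cinf_on W \<psi>"
        "\<phi> ` U = W" "\<forall>q\<in>U. \<psi> (\<phi> q) = q" "\<forall>w\<in>W. \<phi> (\<psi> w) = w"
        "subspace L" "\<phi> ` (M \<inter> U) = L \<inter> W"
    using bspec[OF chs assms(2)] by (elim exE conjE) (rule that, assumption+)
  obtain \<phi>' \<psi>' where "linear \<psi>'" "tangent_space M x = \<psi>' ` L"
    using chart_tangent[OF assms(2) ch] by blast
  then show ?thesis using ch(9) by (simp add: linear_subspace_image)
qed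



lemma retraction_local_onto:
  fixes M :: "'a::euclidean_space set" and R :: "'a \<times> 'a \<Rightarrow> 'a"
  assumes emb: "embedded_submanifold M" and xM: "x \<in> M" and RR: "riem_retraction M R"
  shows "\<exists>C. eventually (\<lambda>y. \<exists>\<eta>\<in>tangent_space M x. R (x, \<eta>) = y \<and> norm \<eta> \<le> C * norm (y - x)) (at x within M)"
proof -
  obtain d where chs: "\<forall>p\<in>M. \<exists>U W (\<phi>::'a \<Rightarrow> 'a) (\<psi>::'a \<Rightarrow> 'a) L.
        open U \<and> p \<in> U \<and> open W \<and> Cinf_on U \<phi> \<and> Cinf_on W \<psi> \<and>
        \<phi> ` U = W \<and> (\<forall>q\<in>U. \<psi> (\<phi> q) = q) \<and> (\<forall>w\<in>W. \<phi> (\<psi> w) = w) \<and>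
        subspace L \<and> dim L = d \<and> \<phi> ` (M \<inter> U) = L \<inter> W"
    using emb unfolding embedded_submanifold_def by blast
  obtain U W L and \<phi> \<psi> :: "'a \<Rightarrow> 'a" where ch: "open U" "x \<in> U" "open W" "Cinf_on U \<phi>" "Cinf_on W \<psi>"
        "\<phi> ` U = W" "\<forall>q\<in>U. \<psi> (\<phi> q) = q" "\<forall>w\<in>W. \<phi> (\<psi> w) = w"
        "subspace L" "\<phi> ` (M \<inter> U) = L \<inter> W"
    using bspec[OF chs xM] by (elim exE conjE) (rule that, assumption+)
  obtain \<phi>' \<psi>' where lphi: "linear \<phi>'" and lpsi: "linear \<psi>'" and dphi: "(\<phi> has_derivative \<phi>') (at x)"
    and id1: "\<forall>u. \<psi>' (\<phi>' u) = u" and Teq: "tangent_space M x = \<psi>' ` L"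
    using chart_tangent[OF xM ch] by blast
  define T where "T = tangent_space M x"
  have Tsub: "subspace T" unfolding T_def by (rule tangent_subspace[OF emb xM])
  have smR: "smooth_map_on (tangent_bundle M) R" and RM: "\<forall>z\<in>tangent_bundle M. R z \<in> M"
    and R0: "R (x, 0) = x" and Rd: "((\<lambda>v. R (x, v)) has_derivative id) (at 0 within T)"
    using RR xM unfolding riem_retraction_def T_def by auto
  have TB: "(x, v) \<in> tangent_bundle M" if "v \<in> T" for v
    using that xM unfolding tangent_bundle_def T_def by simp
  have T0: "0 \<in> T" using Tsub by (rule subspace_0)
  obtain UG and G :: "'a \<times> 'a \<Rightarrow> 'a" where UG: "open UG" "(x, 0) \<in> UG" and cG: "Cinf_on UG G"
    and GR: "\<forall>q\<in>UG \<inter> tangent_bundle M. G q = R q"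
    using smR TB[OF T0] unfolding smooth_map_on_def by blast
  obtain DG where DGc: "continuous_on UG DG" and DG: "\<forall>q\<in>UG. (G has_derivative blinfun_apply (DG q)) (at q)"
    using Cinf_C1[OF cG] by blast
  obtain Dphi where Dphic: "continuous_on U Dphi" and Dphi: "\<forall>q\<in>U. (\<phi> has_derivative blinfun_apply (Dphi q)) (at q)"
    using Cinf_C1[OF ch(4)] by blast
  have phi'eq: "blinfun_apply (Dphi x) = \<phi>'"
    using Dphi ch(2) dphi has_derivative_unique by blast
  have contG: "continuous_on UG G"
    by (rule continuous_at_imp_continuous_on) (use DG has_derivative_continuous in blast)
  define P where "P = proj_onto T"
  have lP: "linear P" unfolding P_def by (rule proj_onto_linear[OF Tsub])
  have blP: "bounded_linear P" using lP linear_conv_bounded_linear by blast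
  have PT: "P z \<in> T" for z unfolding P_def using proj_onto_char[OF Tsub] by blast
  have Porth: "\<forall>w\<in>T. (z - P z) \<bullet> w = 0" for z unfolding P_def using proj_onto_char[OF Tsub] by blast
  have P0: "P 0 = 0" using lP by (rule linear_0)
  have Gx0: "G (x, 0) = x" using GR UG(2) TB[OF T0] R0 by auto
  define F where "F z = \<phi> (G (x, P z)) + \<phi>' (z - P z)" for z
  define O1 where "O1 = (\<lambda>z. (x, P z)) -` UG"
  define Om where "Om = (\<lambda>z. G (x, P z)) -` U \<inter> O1"
  have contPair: "continuous_on S (\<lambda>z. (x, P z))" for S
    by (intro continuous_on_Pair continuous_on_const linear_continuous_on blP)
  have openO1: "open O1" unfolding O1_def using UG(1) contPair by (rule open_vimage)
  have mapO1: "(\<lambda>z. (x, P z)) ` O1 \<subseteq> UG" unfolding O1_def by auto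
  have contGP: "continuous_on O1 (\<lambda>z. G (x, P z))"
    by (rule continuous_on_compose2[OF contG contPair mapO1])
  have openO: "open Om" unfolding Om_def using continuous_on_open_vimage[OF openO1] contGP ch(1) by blast
  have O0: "0 \<in> Om" unfolding Om_def O1_def using P0 UG(2) Gx0 ch(2) by simp
  have mapO: "(\<lambda>z. G (x, P z)) ` Om \<subseteq> U" "(\<lambda>z. (x, P z)) ` Om \<subseteq> UG" unfolding Om_def O1_def by auto
  have blJ: "bounded_linear (\<lambda>h. (0::'a, P h))"
    by (intro bounded_linear_Pair bounded_linear_zero blP)
  have blC: "bounded_linear (\<lambda>h. \<phi>' (h - P h))"
  proof -
    have "linear (\<lambda>h. \<phi>' h - (\<phi>' \<circ> P) h)" by (rule linear_compose_sub[OF lphi linear_compose[OF lP lphi]])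
    moreover have "(\<lambda>h. \<phi>' h - (\<phi>' \<circ> P) h) = (\<lambda>h. \<phi>' (h - P h))"
      by (simp add: fun_eq_iff linear_diff[OF lphi])
    ultimately show ?thesis using linear_conv_bounded_linear by metis
  qed
  define Jb where "Jb = Blinfun (\<lambda>h. (0::'a, P h))"
  define Cb where "Cb = Blinfun (\<lambda>h. \<phi>' (h - P h))"
  have Jb: "blinfun_apply Jb = (\<lambda>h. (0, P h))" unfolding Jb_def using blJ bounded_linear_Blinfun_apply by blast
  have Cb: "blinfun_apply Cb = (\<lambda>h. \<phi>' (h - P h))" unfolding Cb_def using blC bounded_linear_Blinfun_apply by blast
  define F' where "F' z = (Dphi (G (x, P z)) o\<^sub>L DG (x, P z) o\<^sub>L Jb) + Cb" for z
  have derF: "(F has_derivative blinfun_apply (F' z)) (at z)" if "z \<in> Om" for z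
  proof -
    have zU: "G (x, P z) \<in> U" and zG: "(x, P z) \<in> UG" using that mapO by auto
    have d1: "((\<lambda>z. (x, P z)) has_derivative (\<lambda>h. (0, P h))) (at z)"
      by (rule bounded_linear_imp_has_derivative[OF blJ, THEN has_derivative_add_const[where c = "(x, 0)"], simplified])
    have d2: "((\<lambda>z. G (x, P z)) has_derivative (\<lambda>h. DG (x, P z) (0, P h))) (at z)"
      by (rule has_derivative_compose[OF d1]) (use DG zG in blast)
    have d3: "((\<lambda>z. \<phi> (G (x, P z))) has_derivative (\<lambda>h. Dphi (G (x, P z)) (DG (x, P z) (0, P h)))) (at z)"
      by (rule has_derivative_compose[OF d2]) (use Dphi zU in blast)
    have d4: "((\<lambda>z. \<phi>' (z - P z)) has_derivative (\<lambda>h. \<phi>' (h - P h))) (at z)"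
      by (rule bounded_linear_imp_has_derivative[OF blC])
    show ?thesis unfolding F_def[abs_def] F'_def
      by (rule has_derivative_eq_rhs[OF has_derivative_add[OF d3 d4]]) (simp add: fun_eq_iff Jb Cb plus_blinfun.rep_eq)
  qed
  have contF': "continuous_on Om F'"
  proof -
    have c1: "continuous_on Om (\<lambda>z. Dphi (G (x, P z)))"
      by (rule continuous_on_compose2[OF Dphic continuous_on_subset[OF contGP] mapO(1)]) (simp add: Om_def)
    have c2: "continuous_on Om (\<lambda>z. DG (x, P z))"
      by (rule continuous_on_compose2[OF DGc contPair mapO(2)])
    show ?thesis unfolding F'_def by (intro continuous_intros c1 c2)
  qed
  have DGid: "DG (x, 0) (0, k) = k" if "k \<in> T" for k
  proof -
    have e1: "((\<lambda>\<eta>. (x, \<eta>)) has_derivative (\<lambda>k. (0, k))) (at 0)"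
      by (auto intro!: derivative_eq_intros)
    have "((\<lambda>\<eta>. G (x, \<eta>)) has_derivative (\<lambda>k. DG (x, 0) (0, k))) (at 0)"
      by (rule has_derivative_compose[OF e1]) (use DG UG(2) in blast)
    then have A: "((\<lambda>\<eta>. G (x, \<eta>)) has_derivative (\<lambda>k. DG (x, 0) (0, k))) (at 0 within T)"
      by (rule has_derivative_at_withinI)
    obtain dd where dd: "dd > 0" "ball (x, 0) dd \<subseteq> UG" using UG open_contains_ball by blast
    have B: "((\<lambda>\<eta>. G (x, \<eta>)) has_derivative id) (at 0 within T)"
    proof (rule has_derivative_transform_within[OF Rd dd(1) T0])
      fix \<eta> assume "\<eta> \<in> T" "dist \<eta> 0 < dd"
      moreover have "dist (x, \<eta>) (x, 0) = dist \<eta> 0" by (simp add: dist_Pair_Pair)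
      ultimately have "(x, \<eta>) \<in> ball (x, 0) dd" by (simp add: dist_commute)
      then have "(x, \<eta>) \<in> UG \<inter> tangent_bundle M" using dd TB \<open>\<eta> \<in> T\<close> by auto
      then show "R (x, \<eta>) = G (x, \<eta>)" using GR by auto
    qed
    show ?thesis using deriv_unique_subspace[OF A B Tsub that] by simp
  qed
  have F'0: "blinfun_apply (F' 0) h = \<phi>' h" for h
  proof -
    have "blinfun_apply (F' 0) h = \<phi>' (DG (x, 0) (0, P h)) + \<phi>' (h - P h)"
      unfolding F'_def using P0 Gx0 phi'eq by (simp add: Jb Cb plus_blinfun.rep_eq)
    also have "\<dots> = \<phi>' (P h) + \<phi>' (h - P h)" using DGid[OF PT] by simp
    also have "\<dots> = \<phi>' h" using lphi by (simp add: linear_diff)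
    finally show ?thesis .
  qed
  have blpsi: "bounded_linear \<psi>'" using lpsi linear_conv_bounded_linear by blast
  have invf: "Blinfun \<psi>' o\<^sub>L F' 0 = id_blinfun"
    by (rule blinfun_eqI) (simp add: F'0 bounded_linear_Blinfun_apply[OF blpsi] id1)
  obtain U' V g g' where U': "open U'" "U' \<subseteq> Om" "0 \<in> U'" and V: "open V" "F 0 \<in> V"
    and hom: "homeomorphism U' V F g" and dg: "\<And>y. y \<in> V \<Longrightarrow> (g has_derivative (g' y)) (at y)"
    and "\<And>y. y \<in> V \<Longrightarrow> g' y = inv (blinfun_apply (F' (g y)))"
    and "\<And>y. y \<in> V \<Longrightarrow> bij (blinfun_apply (F' (g y)))"
    apply (rule inverse_function_theorem[OF openO derF contF' O0 invf], assumption)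
    by (rule that) assumption+
  have F0: "F 0 = \<phi> x" unfolding F_def using P0 Gx0 lphi by (simp add: linear_0)
  have "\<forall>u\<in>U'. g (F u) = u" using hom by (simp add: homeomorphism_def)
  then have g0: "g (\<phi> x) = 0" using U'(3) F0 by force
  obtain C1 where C1: "C1 > 0" "eventually (\<lambda>w. norm (g w - g (\<phi> x)) \<le> C1 * norm (w - \<phi> x)) (nhds (\<phi> x))"
    using has_derivative_lipschitz_at[OF dg[OF V(2)[unfolded F0]]] by blast
  obtain C2 where C2: "C2 > 0" "eventually (\<lambda>y. norm (\<phi> y - \<phi> x) \<le> C2 * norm (y - x)) (nhds x)"
    using has_derivative_lipschitz_at[OF dphi] by blast
  have lim: "filterlim \<phi> (nhds (\<phi> x)) (nhds x)"
  proof -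
    have "isCont \<phi> x" by (rule has_derivative_continuous[OF dphi])
    then show ?thesis by (simp add: isCont_def tendsto_at_iff_tendsto_nhds)
  qed
  have E1: "eventually (\<lambda>y. y \<in> U) (nhds x)" using ch(1,2) by (rule eventually_nhds_in_open)
  have E2: "eventually (\<lambda>y. \<phi> y \<in> V) (nhds x)"
    by (rule eventually_compose_filterlim[OF _ lim]) (use V F0 in \<open>auto intro: eventually_nhds_in_open\<close>)
  have E3: "eventually (\<lambda>y. norm (g (\<phi> y) - g (\<phi> x)) \<le> C1 * norm (\<phi> y - \<phi> x)) (nhds x)"
    by (rule eventually_compose_filterlim[OF C1(2) lim])
  have "eventually (\<lambda>y. y \<noteq> x \<longrightarrow> y \<in> M \<longrightarrow> (\<exists>\<eta>\<in>T. R (x, \<eta>) = y \<and> norm \<eta> \<le> (C1 * C2) * norm (y - x))) (nhds x)"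
    using E1 E2 E3 C2(2)
  proof eventually_elim
    case (elim y)
    show ?case
    proof (intro impI)
      assume yM: "y \<in> M"
      define z where "z = g (\<phi> y)"
      have hV: "g ` V = U'" and hF: "\<forall>w\<in>V. F (g w) = w" using hom by (simp_all add: homeomorphism_def)
      have zU': "z \<in> U'" unfolding z_def using hV elim(2) by blast
      have Fz: "F z = \<phi> y" unfolding z_def using hF elim(2) by blast
      have zO: "z \<in> Om" using zU' U'(2) by blast
      have GU: "G (x, P z) \<in> U" and GUG: "(x, P z) \<in> UG" using zO mapO by auto
      have GRz: "G (x, P z) = R (x, P z)" using GR GUG TB[OF PT] by blast
      have "R (x, P z) \<in> M" using RM TB[OF PT] by blast
      then have "G (x, P z) \<in> M \<inter> U" using GU GRz by simp
      then have "\<phi> (G (x, P z)) \<in> \<phi> ` (M \<inter> U)" by (rule imageI)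
      then have L1: "\<phi> (G (x, P z)) \<in> L" unfolding ch(10) by simp
      have "y \<in> M \<inter> U" using yM elim(1) by simp
      then have "\<phi> y \<in> \<phi> ` (M \<inter> U)" by (rule imageI)
      then have L2: "\<phi> y \<in> L" unfolding ch(10) by simp
      have "\<phi>' (z - P z) = \<phi> y - \<phi> (G (x, P z))" using Fz unfolding F_def by (simp add: algebra_simps)
      then have "\<phi>' (z - P z) \<in> L" using subspace_diff[OF ch(9) L2 L1] by simp
      then have "\<psi>' (\<phi>' (z - P z)) \<in> T" using Teq T_def by blast
      then have "z - P z \<in> T" using id1 by simp
      then have "(z - P z) \<bullet> (z - P z) = 0" using Porth by blast
      then have zP: "P z = z" by simp
      have zT: "z \<in> T" using PT[of z] zP by simp
      have phR: "\<phi> (R (x, z)) = \<phi> y" using Fz GRz zP lphi unfolding F_def by (simp add: linear_0)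
      have RU: "R (x, z) \<in> U" using GU GRz zP by simp
      have "R (x, z) = \<psi> (\<phi> (R (x, z)))" using ch(7) RU by simp
      also have "\<dots> = \<psi> (\<phi> y)" using phR by simp
      also have "\<dots> = y" using ch(7) elim(1) by simp
      finally have Rz: "R (x, z) = y" .
      have "norm z \<le> C1 * norm (\<phi> y - \<phi> x)" using elim(3) g0 unfolding z_def by simp
      also have "\<dots> \<le> C1 * (C2 * norm (y - x))" using elim(4) C1(1) by (simp add: mult_left_mono)
      finally show "\<exists>\<eta>\<in>T. R (x, \<eta>) = y \<and> norm \<eta> \<le> (C1 * C2) * norm (y - x)"
        using zT Rz by (intro bexI[of _ z]) (auto simp: mult.assoc)
    qed
  qed
  then have "eventually (\<lambda>y. \<exists>\<eta>\<in>T. R (x, \<eta>) = y \<and> norm \<eta> \<le> (C1 * C2) * norm (y - x)) (at x within M)"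
    unfolding eventually_at_filter by simp
  then show ?thesis unfolding T_def by blast
qed



lemma int_bounds:
  fixes e :: "real \<Rightarrow> real"
  assumes mono: "mono e" and a: "a \<le> b"
  shows "e integrable_on {a..b}" "(b - a) * e a \<le> integral {a..b} e" "integral {a..b} e \<le> (b - a) * e b"
proof -
  show ie: "e integrable_on {a..b}"
    by (rule integrable_on_mono_on) (use mono in \<open>auto simp: mono_on_def mono_def\<close>)
  have "integral {a..b} (\<lambda>_. e a) \<le> integral {a..b} e"
    by (rule integral_le[OF _ ie]) (use mono in \<open>auto simp: mono_def\<close>)
  then show "(b - a) * e a \<le> integral {a..b} e" using a by (simp add: content_real)
  have "integral {a..b} e \<le> integral {a..b} (\<lambda>_. e b)"
    by (rule integral_le[OF ie]) (use mono in \<open>auto simp: mono_def\<close>)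
  then show "integral {a..b} e \<le> (b - a) * e b" using a by (simp add: content_real)
qed

lemma radial_C1:
  fixes e :: "real \<Rightarrow> real"
  assumes mono: "mono e" and e0: "\<And>t. 0 \<le> e t"
    and elim: "\<forall>c>0. \<exists>\<delta>>0. \<forall>t. 0 < t \<and> t < \<delta> \<longrightarrow> e t \<le> c"
    and A: "A > 0"
  shows "\<exists>m k. continuous_on {0..A} m \<and> m 0 = 0 \<and> (\<forall>s\<in>{0..A}. 0 \<le> m s) \<and>
     (\<forall>c>0. \<exists>\<delta>>0. \<forall>s\<in>{0..A}. s < \<delta> \<longrightarrow> m s \<le> c) \<and>
     (\<forall>t\<in>{0..A}. (k has_real_derivative m t) (at t within {0..A})) \<and> k 0 = 0 \<and>
     (\<forall>t\<in>{0..A}. t * e t \<le> k t) \<and> (\<forall>c>0. \<exists>\<delta>>0. \<forall>t\<in>{0..A}. t < \<delta> \<longrightarrow> k t \<le> c * t)"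
proof -
  define F where "F t = integral {0..t} e" for t
  define m where "m s = (if s \<le> 0 then 0 else F (4 * s) / s)" for s
  have ie: "e integrable_on {a..b}" if "a \<le> b" for a b using int_bounds[OF mono that] by blast
  have mb: "2 * e (2 * s) \<le> m s \<and> m s \<le> 4 * e (4 * s)" if s: "s > 0" for s
  proof -
    have comb: "integral {0..2 * s} e + integral {2 * s..4 * s} e = F (4 * s)"
      unfolding F_def by (rule Henstock_Kurzweil_Integration.integral_combine) (use s ie in auto)
    have "0 \<le> integral {0..2 * s} e" by (rule integral_nonneg) (use s ie e0 in auto)
    moreover have "(4 * s - 2 * s) * e (2 * s) \<le> integral {2 * s..4 * s} e" using int_bounds[OF mono, of "2 * s" "4 * s"] s by simp
    ultimately have "2 * s * e (2 * s) \<le> F (4 * s)" using comb by simp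
    moreover have "F (4 * s) \<le> (4 * s - 0) * e (4 * s)" unfolding F_def using int_bounds[OF mono, of 0 "4 * s"] s by simp
    ultimately show ?thesis using s unfolding m_def by (simp add: field_simps)
  qed
  have m0: "m 0 = 0" by (simp add: m_def)
  have mnn: "0 \<le> m s" for s
  proof (cases "s > 0")
    case True then show ?thesis using mb[OF True] e0[of "2 * s"] by linarith
  qed (simp add: m_def)
  have msmall: "\<exists>\<delta>>0. \<forall>s. s < \<delta> \<longrightarrow> m s \<le> c" if c: "c > 0" for c
  proof -
    have c4: "c / 4 > 0" using c by simp
    obtain \<delta> where \<delta>: "\<delta> > 0" "\<forall>t. 0 < t \<and> t < \<delta> \<longrightarrow> e t \<le> c / 4" using elim c4 by blast
    have "m s \<le> c" if "s < \<delta> / 4" for s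
    proof (cases "s > 0")
      case True
      then have "e (4 * s) \<le> c / 4" using \<delta> that by auto
      then show ?thesis using mb[OF True] by linarith
    qed (use c in \<open>simp add: m_def\<close>)
    then show ?thesis using \<delta> by (intro exI[of _ "\<delta>/4"]) auto
  qed
  have Fc: "continuous_on {0..4 * A} F" unfolding F_def
    by (rule indefinite_integral_continuous_1[OF ie]) (use A in simp)
  have hc: "continuous_on {0<..A} (\<lambda>s. F (4 * s) / s)"
  proof (intro continuous_on_divide continuous_on_id)
    show "continuous_on {0<..A} (\<lambda>s. F (4 * s))"
      by (rule continuous_on_compose2[OF Fc]) (auto intro!: continuous_intros)
  qed auto
  have mc: "continuous_on {0..A} m"
    unfolding continuous_on_iff
  proof (intro ballI allI impI)
    fix s0 \<epsilon> :: real assume s0: "s0 \<in> {0..A}" and \<epsilon>: "\<epsilon> > 0"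
    show "\<exists>\<delta>>0. \<forall>x'\<in>{0..A}. dist x' s0 < \<delta> \<longrightarrow> dist (m x') (m s0) < \<epsilon>"
    proof (cases "s0 = 0")
      case True
      obtain \<delta> where \<delta>: "\<delta> > 0" "\<forall>s. s < \<delta> \<longrightarrow> m s \<le> \<epsilon> / 2" using msmall[of "\<epsilon>/2"] \<epsilon> by auto
      show ?thesis
      proof (intro exI[of _ \<delta>] conjI ballI impI)
        fix x' assume "x' \<in> {0..A}" "dist x' s0 < \<delta>"
        then have "x' < \<delta>" using True by (simp add: dist_real_def)
        then have "m x' \<le> \<epsilon> / 2" using \<delta>(2) by blast
        then show "dist (m x') (m s0) < \<epsilon>" using True m0 mnn[of x'] \<epsilon> by (simp add: dist_real_def)
      qed (use \<delta> in auto)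
    next
      case False
      then have s0p: "s0 \<in> {0<..A}" using s0 by auto
      obtain d where d: "d > 0" "\<forall>x'\<in>{0<..A}. dist x' s0 < d \<longrightarrow> dist (F (4 * x') / x') (F (4 * s0) / s0) < \<epsilon>"
        using hc s0p \<epsilon> unfolding continuous_on_iff by blast
      show ?thesis
      proof (intro exI[of _ "min d s0"] conjI ballI impI)
        fix x' assume x': "x' \<in> {0..A}" "dist x' s0 < min d s0"
        then have "x' > 0" by (simp add: dist_real_def abs_if split: if_splits)
        then show "dist (m x') (m s0) < \<epsilon>" using d x' s0p by (simp add: m_def)
      qed (use d s0p in auto)
    qed
  qed
  define k where "k t = integral {0..t} m" for t
  have mi: "m integrable_on {a..b}" if "0 \<le> a" "b \<le> A" for a b
    by (rule integrable_continuous_real, rule continuous_on_subset[OF mc]) (use that in auto)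
  have kd: "\<forall>t\<in>{0..A}. (k has_real_derivative m t) (at t within {0..A})"
    unfolding k_def[abs_def] using integral_has_real_derivative[OF mc] by blast
  have k0: "k 0 = 0" by (simp add: k_def)
  have klow: "t * e t \<le> k t" if t: "t \<in> {0..A}" for t
  proof (cases "t > 0")
    case True
    have comb: "integral {0..t/2} m + integral {t/2..t} m = k t"
      unfolding k_def by (rule Henstock_Kurzweil_Integration.integral_combine) (use True t mi in auto)
    have "0 \<le> integral {0..t/2} m" by (rule integral_nonneg) (use True t mi mnn in auto)
    moreover have "integral {t/2..t} (\<lambda>_. 2 * e t) \<le> integral {t/2..t} m"
    proof (rule integral_le)
      show "m integrable_on {t/2..t}" using mi True t by auto
      fix s assume s: "s \<in> {t/2..t}"
      then have "s > 0" using True by auto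
      moreover have "e t \<le> e (2 * s)" using s mono by (auto simp: mono_def)
      ultimately show "2 * e t \<le> m s" using mb[of s] by linarith
    qed (rule integrable_const_ivl)
    moreover have "integral {t/2..t} (\<lambda>_. 2 * e t) = t * e t" using True by (simp add: content_real)
    ultimately show ?thesis using comb by linarith
  qed (use t k0 in auto)
  have ksmall: "\<exists>\<delta>>0. \<forall>t\<in>{0..A}. t < \<delta> \<longrightarrow> k t \<le> c * t" if c: "c > 0" for c
  proof -
    obtain \<delta> where \<delta>: "\<delta> > 0" "\<forall>s. s < \<delta> \<longrightarrow> m s \<le> c" using msmall[OF c] by blast
    have "k t \<le> c * t" if t: "t \<in> {0..A}" "t < \<delta>" for t
    proof -
      have "k t \<le> integral {0..t} (\<lambda>_. c)" unfolding k_def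
        by (rule integral_le) (use t mi \<delta> in auto)
      then show ?thesis using t by (simp add: content_real mult.commute)
    qed
    then show ?thesis using \<delta> by blast
  qed
  have "\<forall>c>0. \<exists>\<delta>>0. \<forall>s\<in>{0..A}. s < \<delta> \<longrightarrow> m s \<le> c" using msmall by blast
  then show ?thesis using mc m0 mnn kd k0 klow ksmall by blast
qed



lemma radial_ball:
  fixes x :: "'a::euclidean_space" and m k :: "real \<Rightarrow> real"
  assumes mc: "continuous_on {0..A} m" and m0: "m 0 = 0" and mnn: "\<forall>s\<in>{0..A}. 0 \<le> m s"
    and msmall: "\<forall>c>0. \<exists>\<delta>>0. \<forall>s\<in>{0..A}. s < \<delta> \<longrightarrow> m s \<le> c"
    and kd: "\<forall>t\<in>{0..A}. (k has_real_derivative m t) (at t within {0..A})" and k0: "k 0 = 0"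
    and ksmall: "\<forall>c>0. \<exists>\<delta>>0. \<forall>t\<in>{0..A}. t < \<delta> \<longrightarrow> k t \<le> c * t"
    and knn: "\<forall>t\<in>{0..A}. 0 \<le> k t" and A: "A > 0"
  shows "(\<forall>y\<in>cball x (A/2). ((\<lambda>y. k (norm (y - x))) has_derivative
            (\<lambda>u. ((m (norm (y - x)) / norm (y - x)) *\<^sub>R (y - x)) \<bullet> u)) (at y)) \<and>
         continuous_on (cball x (A/2)) (\<lambda>y. (m (norm (y - x)) / norm (y - x)) *\<^sub>R (y - x))"
proof -
  define Kg where "Kg y = (m (norm (y - x)) / norm (y - x)) *\<^sub>R (y - x)" for y
  have Kgx: "Kg x = 0" by (simp add: Kg_def)
  have der: "((\<lambda>y. k (norm (y - x))) has_derivative (\<lambda>u. Kg y \<bullet> u)) (at y)" if y: "norm (y - x) < A" for y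
  proof (cases "y = x")
    case False
    define t where "t = norm (y - x)"
    have t: "0 < t" "t < A" using False y by (auto simp: t_def)
    have ti: "t \<in> interior {0..A}" using t by simp
    have "(k has_real_derivative m t) (at t within {0..A})" using kd t by auto
    then have "(k has_real_derivative m t) (at t)" using at_within_interior[OF ti] by simp
    then have dk: "(k has_derivative (\<lambda>s. m t * s)) (at (norm (y - x)))"
      unfolding has_field_derivative_def t_def by simp
    have yx: "y - x \<noteq> 0" using False by simp
    have dn: "((\<lambda>y. norm (y - x)) has_derivative (\<lambda>u. u \<bullet> sgn (y - x))) (at y)"
    proof -
      have "(norm has_derivative (\<lambda>h. h \<bullet> sgn (y - x))) (at (y - x))"
        using has_derivative_norm[OF yx] by (simp add: inner_commute)
      from has_derivative_compose[OF has_derivative_diff[OF has_derivative_ident has_derivative_const] this]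
      show ?thesis by simp
    qed
    have "((\<lambda>y. k (norm (y - x))) has_derivative (\<lambda>u. m t * (u \<bullet> sgn (y - x)))) (at y)"
      by (rule has_derivative_compose[OF dn dk])
    then show ?thesis
      by (rule has_derivative_eq_rhs) (auto simp: fun_eq_iff Kg_def t_def sgn_div_norm inner_commute divide_inverse)
  next
    case True
    have "((\<lambda>y. k (norm (y - x))) has_derivative (\<lambda>u. 0)) (at x)"
      unfolding has_derivative_at
    proof (intro conjI bounded_linear_zero)
      show "(\<lambda>h. norm (k (norm (x + h - x)) - k (norm (x - x)) - 0) / norm h) \<midarrow>0\<rightarrow> 0"
        unfolding LIM_eq
      proof (intro allI impI)
        fix r :: real assume r: "r > 0"
        obtain \<delta> where \<delta>: "\<delta> > 0" "\<forall>t\<in>{0..A}. t < \<delta> \<longrightarrow> k t \<le> (r/2) * t"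
          using ksmall r by (meson half_gt_zero)
        show "\<exists>s>0. \<forall>h. h \<noteq> 0 \<and> norm (h - 0) < s \<longrightarrow>
            norm (norm (k (norm (x + h - x)) - k (norm (x - x)) - 0) / norm h - 0) < r"
        proof (intro exI[of _ "min \<delta> A"] conjI allI impI)
          fix h :: 'a assume h: "h \<noteq> 0 \<and> norm (h - 0) < min \<delta> A"
          then have hA: "norm h \<in> {0..A}" "norm h < \<delta>" by auto
          then have "k (norm h) \<le> (r/2) * norm h" "0 \<le> k (norm h)" using \<delta> knn by auto
          then have "k (norm h) / norm h \<le> r / 2" using h by (simp add: divide_le_eq)
          moreover have "norm (norm (k (norm (x + h - x)) - k (norm (x - x)) - 0) / norm h - 0) = k (norm h) / norm h"
            using \<open>0 \<le> k (norm h)\<close> k0 by simp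
          ultimately show "norm (norm (k (norm (x + h - x)) - k (norm (x - x)) - 0) / norm h - 0) < r"
            using r by linarith
        qed (use \<delta> A in auto)
      qed
    qed
    then show ?thesis using True Kgx by simp
  qed
  have cont: "isCont Kg y" if y: "norm (y - x) < A" for y
  proof (cases "y = x")
    case False
    have "norm (y - x) \<in> interior {0..A}" using False y by simp
    then have "isCont m (norm (y - x))" using continuous_on_interior[OF mc] by blast
    then have "isCont (\<lambda>y. m (norm (y - x))) y"
      by (rule continuous_at_compose[unfolded o_def, rotated]) (intro continuous_intros)
    then show ?thesis unfolding Kg_def using False
      by (intro continuous_intros) auto
  next
    case True
    show ?thesis unfolding isCont_def LIM_eq
    proof (intro allI impI)
      fix r :: real assume r: "r > 0"
      obtain \<delta> where \<delta>: "\<delta> > 0" "\<forall>s\<in>{0..A}. s < \<delta> \<longrightarrow> m s \<le> r/2"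
        using msmall r by (meson half_gt_zero)
      show "\<exists>s>0. \<forall>z. z \<noteq> y \<and> norm (z - y) < s \<longrightarrow> norm (Kg z - Kg y) < r"
      proof (intro exI[of _ "min \<delta> A"] conjI allI impI)
        fix z assume z: "z \<noteq> y \<and> norm (z - y) < min \<delta> A"
        then have "norm (z - x) \<in> {0..A}" "norm (z - x) < \<delta>" "z - x \<noteq> 0" using True by auto
        then have "m (norm (z - x)) \<le> r / 2" "0 \<le> m (norm (z - x))" using \<delta> mnn by auto
        moreover have "norm (Kg z) = m (norm (z - x))"
          using \<open>z - x \<noteq> 0\<close> \<open>0 \<le> m (norm (z - x))\<close> by (simp add: Kg_def)
        ultimately show "norm (Kg z - Kg y) < r" using True Kgx r by simp
      qed (use \<delta> A in auto)
    qed
  qed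
  have "continuous_on (cball x (A/2)) Kg"
    by (rule continuous_at_imp_continuous_on) (use cont A in \<open>auto simp: dist_norm norm_minus_commute\<close>)
  moreover have "\<forall>y\<in>cball x (A/2). ((\<lambda>y. k (norm (y - x))) has_derivative (\<lambda>u. Kg y \<bullet> u)) (at y)"
    using der A by (auto simp: dist_norm norm_minus_commute)
  ultimately show ?thesis unfolding Kg_def by blast
qed



lemma C1_majorant:
  fixes q :: "'a::euclidean_space \<Rightarrow> real" and x :: 'a
  assumes fr: "\<forall>c>0. \<exists>\<delta>>0. \<forall>y\<in>S. norm (y - x) < \<delta> \<longrightarrow> q y \<le> c * norm (y - x)"
  shows "\<exists>\<delta>0>0. \<exists>K Kg. (\<forall>y\<in>cball x \<delta>0. (K has_derivative (\<lambda>u. Kg y \<bullet> u)) (at y)) \<and>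
     continuous_on (cball x \<delta>0) Kg \<and> Kg x = 0 \<and> K x = 0 \<and> (\<forall>y\<in>S. norm (y - x) < \<delta>0 \<longrightarrow> q y \<le> K y)"
proof -
  obtain \<delta>1 where \<delta>1: "\<delta>1 > 0" "\<forall>y\<in>S. norm (y - x) < \<delta>1 \<longrightarrow> q y \<le> 1 * norm (y - x)"
    using fr by (meson zero_less_one)
  define a0 where "a0 = \<delta>1 / 2"
  have a0: "a0 > 0" "a0 < \<delta>1" using \<delta>1 by (auto simp: a0_def)
  define Q where "Q t = {q y / norm (y - x) | y. y \<in> S \<and> 0 < norm (y - x) \<and> norm (y - x) \<le> min t a0}" for t
  define e where "e t = Sup (insert 0 (Q t))" for t
  have Qle1: "z \<le> 1" if zQ: "z \<in> Q t" for z t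
  proof -
    obtain y where y: "z = q y / norm (y - x)" "y \<in> S" "0 < norm (y - x)" "norm (y - x) \<le> min t a0"
      using zQ unfolding Q_def by blast
    then have "q y \<le> norm (y - x)" using \<delta>1 a0 by auto
    then show ?thesis using y by (simp add: divide_le_eq)
  qed
  have bdd: "bdd_above (insert 0 (Q t))" for t
    unfolding bdd_above_def using Qle1 by (intro exI[of _ 1]) auto
  have e0: "0 \<le> e t" for t unfolding e_def by (rule cSup_upper[OF _ bdd]) simp
  have mono: "mono e"
  proof (rule monoI)
    fix s t :: real assume "s \<le> t"
    then have "Q s \<subseteq> Q t" unfolding Q_def by fastforce
    then show "e s \<le> e t" unfolding e_def by (intro cSup_subset_mono bdd) auto
  qed
  have elim: "\<forall>c>0. \<exists>\<delta>>0. \<forall>t. 0 < t \<and> t < \<delta> \<longrightarrow> e t \<le> c"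
  proof (intro allI impI)
    fix c :: real assume c: "c > 0"
    obtain \<delta> where \<delta>: "\<delta> > 0" "\<forall>y\<in>S. norm (y - x) < \<delta> \<longrightarrow> q y \<le> c * norm (y - x)" using fr c by blast
    have "e t \<le> c" if t: "0 < t" "t < \<delta>" for t
      unfolding e_def
    proof (rule cSup_least)
      fix z assume "z \<in> insert 0 (Q t)"
      then show "z \<le> c"
      proof
        assume "z \<in> Q t"
        then obtain y where y: "z = q y / norm (y - x)" "y \<in> S" "0 < norm (y - x)" "norm (y - x) \<le> min t a0"
          unfolding Q_def by blast
        then have "q y \<le> c * norm (y - x)" using \<delta> t by auto
        then show ?thesis using y by (simp add: divide_le_eq)
      qed (use c in simp)
    qed simp
    then show "\<exists>\<delta>>0. \<forall>t. 0 < t \<and> t < \<delta> \<longrightarrow> e t \<le> c" using \<delta> by blast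
  qed
  have qbound: "q y \<le> norm (y - x) * e (norm (y - x))" if y: "y \<in> S" "0 < norm (y - x)" "norm (y - x) \<le> a0" for y
  proof -
    have "q y / norm (y - x) \<in> Q (norm (y - x))" unfolding Q_def using y by auto
    then have "q y / norm (y - x) \<le> e (norm (y - x))" unfolding e_def by (intro cSup_upper bdd) auto
    then show ?thesis using y by (simp add: divide_le_eq mult.commute)
  qed
  obtain m k where mc: "continuous_on {0..a0} m" and m0: "m 0 = 0" and mnn: "\<forall>s\<in>{0..a0}. 0 \<le> m s"
    and msmall: "\<forall>c>0. \<exists>\<delta>>0. \<forall>s\<in>{0..a0}. s < \<delta> \<longrightarrow> m s \<le> c"
    and kd: "\<forall>t\<in>{0..a0}. (k has_real_derivative m t) (at t within {0..a0})" and k0: "k 0 = 0"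
    and klow: "\<forall>t\<in>{0..a0}. t * e t \<le> k t" and ksmall: "\<forall>c>0. \<exists>\<delta>>0. \<forall>t\<in>{0..a0}. t < \<delta> \<longrightarrow> k t \<le> c * t"
    using radial_C1[OF mono e0 elim a0(1)] by blast
  have knn: "\<forall>t\<in>{0..a0}. 0 \<le> k t"
  proof
    fix t assume "t \<in> {0..a0}"
    then show "0 \<le> k t" using klow e0[of t] by (smt (verit) atLeastAtMost_iff mult_nonneg_nonneg)
  qed
  have rb: "(\<forall>y\<in>cball x (a0/2). ((\<lambda>y. k (norm (y - x))) has_derivative
            (\<lambda>u. ((m (norm (y - x)) / norm (y - x)) *\<^sub>R (y - x)) \<bullet> u)) (at y)) \<and>
         continuous_on (cball x (a0/2)) (\<lambda>y. (m (norm (y - x)) / norm (y - x)) *\<^sub>R (y - x))"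
    by (rule radial_ball[OF mc m0 mnn msmall kd k0 ksmall knn a0(1)])
  have maj: "q y \<le> k (norm (y - x))" if y: "y \<in> S" "norm (y - x) < a0 / 2" for y
  proof (cases "y = x")
    case True
    have "q x \<le> 1 * norm (x - x)" using \<delta>1 y True by auto
    then show ?thesis using True k0 by simp
  next
    case False
    then have "q y \<le> norm (y - x) * e (norm (y - x))" using qbound y a0 by auto
    also have "\<dots> \<le> k (norm (y - x))" using klow y a0 by auto
    finally show ?thesis .
  qed
  show ?thesis
    apply (rule exI[of _ "a0/2"])
    apply (intro conjI)
    using a0 apply simp
    apply (rule exI[of _ "\<lambda>y. k (norm (y - x))"], rule exI[of _ "\<lambda>y. (m (norm (y - x)) / norm (y - x)) *\<^sub>R (y - x)"])
    using rb maj k0 by auto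
qed



theorem proposition3p2:
  fixes M :: "'a::euclidean_space set" and f :: "'a \<Rightarrow> real"
    and R :: "'a \<times> 'a \<Rightarrow> 'a" and x v :: 'a
  assumes "embedded_submanifold M" and "riemannian_complete M"
    and "lower_semicontinuous f" and "x \<in> M" and "riem_retraction M R"
  shows "v \<in> riem_frechet_subdiff M f x \<longleftrightarrow>
     v \<in> tangent_space M x \<and>
     (\<exists>r. r \<in> o[at 0 within tangent_space M x](\<lambda>\<eta>. norm \<eta>) \<and>
        (\<forall>\<eta>\<in>tangent_space M x. f (R (x, \<eta>)) \<ge> f (R (x, 0)) + v \<bullet> \<eta> + r \<eta>))"
proof -
  note emb = assms(1) and xM = assms(4) and RR = assms(5)
  define T where "T = tangent_space M x"
  have Tsub: "subspace T" unfolding T_def by (rule tangent_subspace[OF emb xM])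
  have RM: "\<forall>z\<in>tangent_bundle M. R z \<in> M"
    and R0: "R (x, 0) = x" and Rd: "((\<lambda>v. R (x, v)) has_derivative id) (at 0 within T)"
    using RR xM unfolding riem_retraction_def T_def by auto
  have TB: "(x, w) \<in> tangent_bundle M" if "w \<in> T" for w
    using that xM unfolding tangent_bundle_def T_def by simp
  have T0: "0 \<in> T" using Tsub by (rule subspace_0)
  have Rlim: "eventually (\<lambda>\<eta>. norm (R (x, \<eta>) - x - \<eta>) \<le> c * norm \<eta>) (at 0 within T)" if c: "c > 0" for c
  proof -
    have "((\<lambda>\<eta>. norm ((R (x, \<eta>) - R (x, 0)) - id (\<eta> - 0)) / norm (\<eta> - 0)) \<longlongrightarrow> 0) (at 0 within T)"
      using Rd unfolding has_derivative_iff_norm by blast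
    then have "eventually (\<lambda>\<eta>. norm ((R (x, \<eta>) - R (x, 0)) - id (\<eta> - 0)) / norm (\<eta> - 0) < c) (at 0 within T)"
      by (rule order_tendstoD) (use c in simp)
    then show ?thesis unfolding eventually_at_filter
      by (rule eventually_mono) (auto simp: R0 divide_less_eq)
  qed
  have fwd: "v \<in> T \<and> (\<exists>r. r \<in> o[at 0 within T](\<lambda>\<eta>. norm \<eta>) \<and>
        (\<forall>\<eta>\<in>T. f (R (x, \<eta>)) \<ge> f (R (x, 0)) + v \<bullet> \<eta> + r \<eta>))"
    if vS: "v \<in> riem_frechet_subdiff M f x"
  proof -
    obtain g h \<delta> \<epsilon> where v: "v = proj_onto T (g x)" and \<delta>: "\<delta> > 0"
      and hd: "\<forall>y\<in>cball x \<delta>. (h has_derivative (\<lambda>u. g y \<bullet> u)) (at y)"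
      and \<epsilon>: "\<epsilon> > 0" "\<forall>y\<in>M. dist y x < \<epsilon> \<longrightarrow> f x - h x \<le> f y - h y"
      using vS unfolding riem_frechet_subdiff_def T_def by blast
    have vT: "v \<in> T" and orth: "\<forall>w\<in>T. (g x - v) \<bullet> w = 0" using proj_onto_char[OF Tsub, of "g x"] v by auto
    define r where "r \<eta> = min 0 (f (R (x, \<eta>)) - f (R (x, 0)) - v \<bullet> \<eta>)" for \<eta>
    have ineq: "\<forall>\<eta>\<in>T. f (R (x, \<eta>)) \<ge> f (R (x, 0)) + v \<bullet> \<eta> + r \<eta>"
      unfolding r_def by auto
    have hx: "(h has_derivative (\<lambda>u. g x \<bullet> u)) (at (R (x, 0)))" using hd \<delta> R0 by simp
    have dhR: "((\<lambda>\<eta>. h (R (x, \<eta>))) has_derivative (\<lambda>\<eta>. g x \<bullet> id \<eta>)) (at 0 within T)"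
      by (rule has_derivative_compose[OF Rd hx])
    have "r \<in> o[at 0 within T](\<lambda>\<eta>. norm \<eta>)"
      unfolding smallo_def
    proof (intro CollectI allI impI)
      fix c :: real assume c: "c > 0"
      have "((\<lambda>\<eta>. norm ((h (R (x, \<eta>)) - h (R (x, 0))) - g x \<bullet> id (\<eta> - 0)) / norm (\<eta> - 0)) \<longlongrightarrow> 0) (at 0 within T)"
        using dhR unfolding has_derivative_iff_norm by blast
      then have ev1: "eventually (\<lambda>\<eta>. norm ((h (R (x, \<eta>)) - h (R (x, 0))) - g x \<bullet> id (\<eta> - 0)) / norm (\<eta> - 0) < c) (at 0 within T)"
        by (rule order_tendstoD) (use c in simp)
      have "continuous (at 0 within T) (\<lambda>\<eta>. R (x, \<eta>))" using Rd by (rule has_derivative_continuous)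
      then have "((\<lambda>\<eta>. R (x, \<eta>)) \<longlongrightarrow> x) (at 0 within T)" using R0 by (simp add: continuous_within)
      then have ev2: "eventually (\<lambda>\<eta>. dist (R (x, \<eta>)) x < \<epsilon>) (at 0 within T)"
        using \<epsilon>(1) unfolding tendsto_iff by blast
      have ev3: "eventually (\<lambda>\<eta>. \<eta> \<in> T \<and> \<eta> \<noteq> 0) (at 0 within T)"
        unfolding eventually_at_filter by simp
      show "eventually (\<lambda>\<eta>. norm (r \<eta>) \<le> c * norm (norm \<eta>)) (at 0 within T)"
        using ev1 ev2 ev3
      proof eventually_elim
        case (elim \<eta>)
        have RMe: "R (x, \<eta>) \<in> M" using RM TB elim(3) by blast
        have "f x - h x \<le> f (R (x, \<eta>)) - h (R (x, \<eta>))" using \<epsilon>(2) RMe elim(2) by blast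
        moreover have "g x \<bullet> \<eta> = v \<bullet> \<eta>" using orth elim(3) by (simp add: inner_diff_left)
        moreover have "norm (h (R (x, \<eta>)) - h x - g x \<bullet> \<eta>) < c * norm \<eta>"
          using elim(1) elim(3) R0 by (simp add: divide_less_eq)
        ultimately have "- (c * norm \<eta>) \<le> f (R (x, \<eta>)) - f (R (x, 0)) - v \<bullet> \<eta>"
          using R0 by (simp add: abs_less_iff)
        then show ?case unfolding r_def using c by (simp add: abs_if min_def)
      qed
    qed
    then show ?thesis using vT ineq by blast
  qed
  have bwd: "v \<in> riem_frechet_subdiff M f x"
    if vT: "v \<in> T" and rr: "r \<in> o[at 0 within T](\<lambda>\<eta>. norm \<eta>)"
      and ineq: "\<forall>\<eta>\<in>T. f (R (x, \<eta>)) \<ge> f (R (x, 0)) + v \<bullet> \<eta> + r \<eta>" for r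
  proof -
    have Tcond: "eventually (\<lambda>\<eta>. f (R (x, \<eta>)) \<ge> f x + v \<bullet> \<eta> - c * norm \<eta>) (at 0 within T)" if c: "c > 0" for c
    proof -
      have "eventually (\<lambda>\<eta>. norm (r \<eta>) \<le> c * norm (norm \<eta>)) (at 0 within T)"
        using rr c unfolding smallo_def by blast
      moreover have "eventually (\<lambda>\<eta>. \<eta> \<in> T) (at 0 within T)" unfolding eventually_at_filter by simp
      ultimately show ?thesis
      proof eventually_elim
        case (elim \<eta>)
        then show ?case using ineq R0 by (smt (verit) norm_ge_zero real_norm_def)
      qed
    qed
    obtain C0 where C0: "eventually (\<lambda>y. \<exists>\<eta>\<in>T. R (x, \<eta>) = y \<and> norm \<eta> \<le> C0 * norm (y - x)) (at x within M)"
      using retraction_local_onto[OF emb xM RR] unfolding T_def by blast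
    define C1 where "C1 = \<bar>C0\<bar> + 1"
    have C1: "C1 > 0" unfolding C1_def by simp
    have KL: "eventually (\<lambda>y. \<exists>\<eta>\<in>T. R (x, \<eta>) = y \<and> norm \<eta> \<le> C1 * norm (y - x)) (at x within M)"
      using C0
    proof (rule eventually_mono)
      fix y assume "\<exists>\<eta>\<in>T. R (x, \<eta>) = y \<and> norm \<eta> \<le> C0 * norm (y - x)"
      then obtain \<eta> where "\<eta> \<in> T" "R (x, \<eta>) = y" "norm \<eta> \<le> C0 * norm (y - x)" by blast
      moreover have "C0 * norm (y - x) \<le> C1 * norm (y - x)" unfolding C1_def by (intro mult_right_mono) auto
      ultimately show "\<exists>\<eta>\<in>T. R (x, \<eta>) = y \<and> norm \<eta> \<le> C1 * norm (y - x)" by force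
    qed
    define q where "q y = f x + v \<bullet> (y - x) - f y" for y
    have Mcond: "\<exists>\<delta>>0. \<forall>y\<in>M. norm (y - x) < \<delta> \<longrightarrow> q y \<le> c * norm (y - x)" if c: "c > 0" for c
    proof -
      define c1 where "c1 = c / (2 * C1)"
      define c2 where "c2 = c / (2 * C1 * (norm v + 1))"
      have nv: "norm v + 1 > 0" by (simp add: add_nonneg_pos)
      have c1: "c1 > 0" using c C1 by (simp add: c1_def)
      have c2: "c2 > 0" unfolding c2_def using c C1 nv by (intro divide_pos_pos mult_pos_pos) auto
      have "eventually (\<lambda>\<eta>. f (R (x, \<eta>)) \<ge> f x + v \<bullet> \<eta> - c1 * norm \<eta> \<and>
              norm (R (x, \<eta>) - x - \<eta>) \<le> c2 * norm \<eta>) (at 0 within T)"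
        using Tcond[OF c1] Rlim[OF c2] by (rule eventually_conj)
      then obtain \<sigma> where \<sigma>: "\<sigma> > 0" "\<forall>\<eta>\<in>T. \<eta> \<noteq> 0 \<and> dist \<eta> 0 < \<sigma> \<longrightarrow>
          f (R (x, \<eta>)) \<ge> f x + v \<bullet> \<eta> - c1 * norm \<eta> \<and> norm (R (x, \<eta>) - x - \<eta>) \<le> c2 * norm \<eta>"
        unfolding eventually_at by blast
      obtain \<delta> where \<delta>: "\<delta> > 0" "\<forall>y\<in>M. y \<noteq> x \<and> dist y x < \<delta> \<longrightarrow>
          (\<exists>\<eta>\<in>T. R (x, \<eta>) = y \<and> norm \<eta> \<le> C1 * norm (y - x))"
        using KL unfolding eventually_at by blast
      have "q y \<le> c * norm (y - x)" if y: "y \<in> M" "norm (y - x) < min \<delta> (\<sigma> / C1)" for y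
      proof (cases "y = x")
        case True then show ?thesis by (simp add: q_def)
      next
        case False
        then obtain \<eta> where \<eta>: "\<eta> \<in> T" "R (x, \<eta>) = y" "norm \<eta> \<le> C1 * norm (y - x)"
          using \<delta> y by (auto simp: dist_norm)
        have "\<eta> \<noteq> 0" using \<eta>(2) R0 False by auto
        have "C1 * norm (y - x) < \<sigma>" using y C1 by (simp add: pos_less_divide_eq mult.commute)
        then have "dist \<eta> 0 < \<sigma>" using \<eta>(3) by simp
        then have h1: "f y \<ge> f x + v \<bullet> \<eta> - c1 * norm \<eta>" and h2: "norm (y - x - \<eta>) \<le> c2 * norm \<eta>"
          using \<sigma>(2) \<eta> \<open>\<eta> \<noteq> 0\<close> by auto
        have "v \<bullet> (y - x) - v \<bullet> \<eta> = v \<bullet> (y - x - \<eta>)" by (simp add: inner_diff_right)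
        also have "\<dots> \<le> norm v * norm (y - x - \<eta>)" by (rule order_trans[OF _ Cauchy_Schwarz_ineq2]) simp
        also have "\<dots> \<le> norm v * (c2 * norm \<eta>)" using h2 by (simp add: mult_left_mono)
        also have "\<dots> \<le> c / (2 * C1) * norm \<eta>"
        proof -
          have "norm v * c2 = c / (2 * C1) * (norm v / (norm v + 1))" unfolding c2_def by (simp add: field_simps)
          also have "\<dots> \<le> c / (2 * C1) * 1" using c C1 nv by (intro mult_left_mono) (auto simp: divide_le_eq)
          finally have "norm v * c2 \<le> c / (2 * C1)" by simp
          from mult_right_mono[OF this norm_ge_zero[of \<eta>]] show ?thesis by (simp add: mult.assoc)
        qed
        finally have h3: "v \<bullet> (y - x) - v \<bullet> \<eta> \<le> c / (2 * C1) * norm \<eta>" .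
        have "q y \<le> c / (2 * C1) * norm \<eta> + c1 * norm \<eta>" using h1 h3 unfolding q_def by simp
        also have "\<dots> = (c / C1) * norm \<eta>" unfolding c1_def by (simp add: field_simps)
        also have "\<dots> \<le> (c / C1) * (C1 * norm (y - x))" using \<eta>(3) c C1 by (intro mult_left_mono) auto
        also have "\<dots> = c * norm (y - x)" using C1 by simp
        finally show ?thesis .
      qed
      moreover have "min \<delta> (\<sigma> / C1) > 0" using \<delta> \<sigma> C1 by simp
      ultimately show ?thesis by blast
    qed
    obtain \<delta>0 K Kg where \<delta>0: "\<delta>0 > 0" and Kd: "\<forall>y\<in>cball x \<delta>0. (K has_derivative (\<lambda>u. Kg y \<bullet> u)) (at y)"
      and Kgc: "continuous_on (cball x \<delta>0) Kg" and Kgx: "Kg x = 0" and Kx: "K x = 0"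
      and Kmaj: "\<forall>y\<in>M. norm (y - x) < \<delta>0 \<longrightarrow> q y \<le> K y"
      using C1_majorant[of M x q] Mcond by blast
    define h where "h y = f x + v \<bullet> (y - x) - K y" for y
    define g where "g y = v - Kg y" for y
    have hd: "\<forall>y\<in>cball x \<delta>0. (h has_derivative (\<lambda>u. g y \<bullet> u)) (at y)"
    proof
      fix y assume y: "y \<in> cball x \<delta>0"
      have "((\<lambda>y. f x + v \<bullet> (y - x) - K y) has_derivative (\<lambda>u. 0 + v \<bullet> (u - 0) - Kg y \<bullet> u)) (at y)"
        by (intro has_derivative_diff has_derivative_add has_derivative_const has_derivative_inner_right
              has_derivative_ident) (use Kd y in blast)
      then show "(h has_derivative (\<lambda>u. g y \<bullet> u)) (at y)"
        unfolding h_def[abs_def] g_def by (rule has_derivative_eq_rhs) (simp add: fun_eq_iff inner_diff_left)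
    qed
    have gc: "continuous_on (cball x \<delta>0) g" unfolding g_def by (intro continuous_intros Kgc)
    have lmin: "\<forall>y\<in>M. dist y x < \<delta>0 \<longrightarrow> f x - h x \<le> f y - h y"
    proof (intro ballI impI)
      fix y assume "y \<in> M" "dist y x < \<delta>0"
      then have "q y \<le> K y" using Kmaj by (simp add: dist_norm)
      then show "f x - h x \<le> f y - h y" unfolding h_def q_def using Kx by simp
    qed
    have pv: "proj_onto T (g x) = v"
      unfolding g_def Kgx by (rule proj_onto_eq[OF Tsub vT]) simp
    show ?thesis unfolding riem_frechet_subdiff_def
      using pv \<delta>0 hd gc lmin unfolding T_def by blast
  qed
  show ?thesis
    using fwd bwd unfolding T_def by blast
qed



end
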